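(* For any real number field $K$ and any $a,b\in K$ with $a>0$ and $b\neq 0$, there exist $x,y,z,u,v,w\in K$ satisfying $$x^2 - ay^2 + au^2 - bv^2 + abw^2 = 0,\qquad z^2 - 4 = au^2,\qquad \mathbb{Q}\left(\tfrac{y}{u}\right) = \mathbb{Q}\left(\tfrac{y^2}{u^2}\right) = K,$$ and $$u\neq 0,\quad x + \frac{yz}{2u} > 2,\quad \frac{y}{u}>1,\quad z>2,\quad abw^2 - bv^2 > 4.$$
   Context: A real number field is a field $K\subset\mathbb{R}$ with $[K:\mathbb{Q}]<\infty$. *)

theory Defs
  imports Complex_Main
begin

definition real_subfield :: "real set \<Rightarrow> bool" where
  "real_subfield K \<longleftrightarrow> 0 \<in> K \<and> 1 \<in> K \<and>
     (\<forall>x\<in>K. \<forall>y\<in>K. x + y \<in> K \<and> x - y \<in> K \<and> x * y \<in> K) \<and>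
     (\<forall>x\<in>K. x \<noteq> 0 \<longrightarrow> inverse x \<in> K)"

text \<open>A real number field: a subfield K of the reals with [K:Q] finite,
  i.e. K is spanned over Q by finitely many of its elements.\<close>
definition real_number_field :: "real set \<Rightarrow> bool" where
  "real_number_field K \<longleftrightarrow> real_subfield K \<and>
     (\<exists>B. finite B \<and> B \<subseteq> K \<and>
        (\<forall>x\<in>K. \<exists>c :: real \<Rightarrow> rat. x = (\<Sum>b\<in>B. of_rat (c b) * b)))"

definition Q_adjoin :: "real \<Rightarrow> real set" where
  "Q_adjoin \<alpha> = \<Inter>{F. real_subfield F \<and> \<alpha> \<in> F}"

end

theory Submission
  imports Defs "HOL-Computational_Algebra.Polynomial_Factorial" "HOL-Computational_Algebra.Fundamental_Theorem_Algebra" "HOL-Computational_Algebra.Field_as_Ring"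
begin


section \<open>Subfield basics\<close>

lemma sf_0: "real_subfield F \<Longrightarrow> 0 \<in> F" by (simp add: real_subfield_def)
lemma sf_1: "real_subfield F \<Longrightarrow> 1 \<in> F" by (simp add: real_subfield_def)
lemma sf_add: "real_subfield F \<Longrightarrow> x \<in> F \<Longrightarrow> y \<in> F \<Longrightarrow> x + y \<in> F" by (simp add: real_subfield_def)
lemma sf_diff: "real_subfield F \<Longrightarrow> x \<in> F \<Longrightarrow> y \<in> F \<Longrightarrow> x - y \<in> F" by (simp add: real_subfield_def)
lemma sf_mult: "real_subfield F \<Longrightarrow> x \<in> F \<Longrightarrow> y \<in> F \<Longrightarrow> x * y \<in> F" by (simp add: real_subfield_def)
lemma sf_inverse: "real_subfield F \<Longrightarrow> x \<in> F \<Longrightarrow> inverse x \<in> F"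
  by (cases "x = 0") (auto simp: real_subfield_def)
lemma sf_divide: "real_subfield F \<Longrightarrow> x \<in> F \<Longrightarrow> y \<in> F \<Longrightarrow> x / y \<in> F"
  by (simp add: divide_inverse sf_mult sf_inverse)
lemma sf_uminus: "real_subfield F \<Longrightarrow> x \<in> F \<Longrightarrow> - x \<in> F"
  using sf_diff[of F 0 x] sf_0 by auto
lemma sf_power: "real_subfield F \<Longrightarrow> x \<in> F \<Longrightarrow> x ^ n \<in> F"
proof (induction n)
  case 0 then show ?case using sf_1 by simp
next
  case (Suc n) then show ?case using sf_mult[of F x "x ^ n"] by simp
qed
lemma sf_of_nat: "real_subfield F \<Longrightarrow> of_nat n \<in> F"
proof (induction n)
  case 0 then show ?case using sf_0 by simp
next
  case (Suc n) then show ?case using sf_add[of F 1 "of_nat n"] sf_1 by simp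
qed
lemma sf_of_int: "real_subfield F \<Longrightarrow> of_int n \<in> F"
proof -
  assume F: "real_subfield F"
  have e: "(of_int n::real) = of_nat (nat n) - of_nat (nat (- n))" by (cases "n \<ge> 0") auto
  show ?thesis unfolding e by (rule sf_diff[OF F sf_of_nat[OF F] sf_of_nat[OF F]])
qed
lemma sf_of_rat: "real_subfield F \<Longrightarrow> of_rat r \<in> F"
proof -
  assume F: "real_subfield F"
  obtain a b where "quotient_of r = (a, b)" by (cases "quotient_of r") auto
  then have "r = of_int a / of_int b" by (rule quotient_of_div)
  then have "of_rat r = (of_int a / of_int b :: real)"
    by (simp add: of_rat_divide)
  then show ?thesis by (simp add: F sf_divide sf_of_int)
qed
lemma sf_Rats: "real_subfield F \<Longrightarrow> x \<in> \<rat> \<Longrightarrow> x \<in> F"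
  by (auto elim: Rats_cases intro: sf_of_rat)
lemma sf_numeral: "real_subfield F \<Longrightarrow> numeral n \<in> F"
  using sf_of_nat[of F "numeral n"] by simp
lemma sf_sum: "real_subfield F \<Longrightarrow> (\<And>i. i \<in> I \<Longrightarrow> f i \<in> F) \<Longrightarrow> sum f I \<in> F"
proof (induction I rule: infinite_finite_induct)
  case (insert i I) then show ?case using sf_add[of F "f i" "sum f I"] by simp
qed (auto simp: sf_0)

lemma sf_Q_adjoin: "real_subfield (Q_adjoin a)"
  unfolding real_subfield_def Q_adjoin_def by auto
lemma in_Q_adjoin: "a \<in> Q_adjoin a"
  unfolding Q_adjoin_def by auto
lemma Q_adjoin_min: "real_subfield F \<Longrightarrow> a \<in> F \<Longrightarrow> Q_adjoin a \<subseteq> F"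
  unfolding Q_adjoin_def by auto

section \<open>Rational vector space\<close>

definition rscale :: "rat \<Rightarrow> real \<Rightarrow> real" where "rscale r x = of_rat r * x"

interpretation rvs: vector_space rscale
  by unfold_locales (auto simp: rscale_def algebra_simps of_rat_add of_rat_mult)

definition rp :: "rat poly \<Rightarrow> real poly" where "rp p = map_poly of_rat p"

lemma rp_add [simp]: "rp (p + q) = rp p + rp q"
  by (intro poly_eqI) (simp add: rp_def coeff_map_poly of_rat_add)
lemma rp_diff [simp]: "rp (p - q) = rp p - rp q"
  by (intro poly_eqI) (simp add: rp_def coeff_map_poly of_rat_diff)
lemma rp_0 [simp]: "rp 0 = 0" by (simp add: rp_def)
lemma rp_1 [simp]: "rp 1 = 1" by (simp add: rp_def)
lemma rp_smult [simp]: "rp (smult c p) = smult (of_rat c) (rp p)"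
  by (simp add: rp_def map_poly_smult of_rat_mult)
lemma rp_pCons [simp]: "rp (pCons c p) = pCons (of_rat c) (rp p)"
  by (simp add: rp_def map_poly_pCons)
lemma rp_mult [simp]: "rp (p * q) = rp p * rp q"
  by (induction p) simp_all
lemma rp_monom [simp]: "rp (monom c i) = monom (of_rat c) i"
  by (simp add: rp_def map_poly_monom)
lemma rp_sum [simp]: "rp (sum f I) = (\<Sum>i\<in>I. rp (f i))"
  by (induction I rule: infinite_finite_induct) (simp_all del: rp_pCons)
lemma rp_power [simp]: "rp (p ^ n) = rp p ^ n"
  by (induction n) auto
lemma rp_eq_0_iff [simp]: "rp p = 0 \<longleftrightarrow> p = 0"
  by (simp add: rp_def map_poly_eq_0_iff)
lemma degree_rp [simp]: "degree (rp p) = degree p"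
  by (simp add: rp_def degree_map_poly)
lemma coeff_rp [simp]: "coeff (rp p) i = of_rat (coeff p i)"
  by (simp add: rp_def coeff_map_poly)
lemma rp_pderiv: "rp (pderiv p) = pderiv (rp p)"
  by (intro poly_eqI) (simp add: coeff_pderiv of_rat_mult of_rat_add)

lemma algebraic_in_K:
  assumes K: "real_number_field K" and x: "x \<in> K"
  shows "\<exists>p. p \<noteq> 0 \<and> poly (rp p) x = 0"
proof -
  from K obtain B where B: "finite B" "B \<subseteq> K"
    "\<forall>y\<in>K. \<exists>c :: real \<Rightarrow> rat. y = (\<Sum>b\<in>B. of_rat (c b) * b)"
    unfolding real_number_field_def by blast
  have F: "real_subfield K" using K by (simp add: real_number_field_def)
  have spanK: "K \<subseteq> rvs.span B"
  proof
    fix y assume "y \<in> K"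
    then obtain c where "y = (\<Sum>b\<in>B. of_rat (c b) * b)" using B by blast
    then show "y \<in> rvs.span B" unfolding rvs.span_finite[OF B(1)] rscale_def by auto
  qed
  define n where "n = card B"
  show ?thesis
  proof (cases "inj_on (\<lambda>i. x ^ i) {..n}")
    case False
    then obtain i j where ij: "i \<le> n" "j \<le> n" "i \<noteq> j" "x ^ i = x ^ j"
      unfolding inj_on_def by auto
    define p :: "rat poly" where "p = monom 1 i - monom 1 j"
    have "coeff p i = 1" using ij by (simp add: p_def coeff_monom)
    then have "p \<noteq> 0" by auto
    moreover have "poly (rp p) x = 0"
      using ij by (simp add: p_def poly_monom)
    ultimately show ?thesis by blast
  next
    case True
    define T where "T = (\<lambda>i. x ^ i) ` {..n}"
    have cardT: "card T = n + 1" using True by (simp add: T_def card_image)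
    have TK: "T \<subseteq> K" using x F by (auto simp: T_def intro: sf_power)
    have "rvs.dependent T"
    proof (rule ccontr)
      assume "rvs.independent T"
      then have "card T \<le> card B" using rvs.independent_span_bound[OF B(1)] spanK TK by blast
      then show False using cardT n_def by simp
    qed
    moreover have "finite T" by (simp add: T_def)
    ultimately obtain u where u: "\<exists>v\<in>T. u v \<noteq> 0" "(\<Sum>v\<in>T. rscale (u v) v) = 0"
      using rvs.dependent_finite by blast
    define p :: "rat poly" where "p = (\<Sum>i\<le>n. monom (u (x ^ i)) i)"
    have cp: "coeff p i = (if i \<le> n then u (x ^ i) else 0)" for i
      by (simp add: p_def coeff_sum coeff_monom)
    from u(1) obtain i where i: "i \<le> n" "u (x ^ i) \<noteq> 0" by (auto simp: T_def)
    then have "p \<noteq> 0" using cp[of i] by auto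
    moreover have "poly (rp p) x = 0"
    proof -
      have "poly (rp p) x = (\<Sum>i\<le>n. of_rat (u (x ^ i)) * x ^ i)"
        by (simp add: p_def poly_sum poly_monom)
      also have "\<dots> = (\<Sum>v\<in>T. rscale (u v) v)"
        unfolding T_def using True by (simp add: sum.reindex rscale_def)
      finally show ?thesis using u(2) by simp
    qed
    ultimately show ?thesis by blast
  qed
qed



section \<open>Minimal polynomials and Q[x]\<close>

definition is_minpoly :: "rat poly \<Rightarrow> real \<Rightarrow> bool" where
  "is_minpoly g x \<longleftrightarrow> g \<noteq> 0 \<and> poly (rp g) x = 0 \<and>
     (\<forall>p. p \<noteq> 0 \<longrightarrow> poly (rp p) x = 0 \<longrightarrow> degree g \<le> degree p)"

lemma minpoly_exists:
  assumes "\<exists>p. p \<noteq> 0 \<and> poly (rp p) x = 0"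
  shows "\<exists>g. is_minpoly g x"
proof -
  from assms obtain p where "p \<noteq> 0 \<and> poly (rp p) x = 0" by blast
  from ex_has_least_nat[of "\<lambda>p. p \<noteq> 0 \<and> poly (rp p) x = 0", OF this, of degree]
  show ?thesis unfolding is_minpoly_def by blast
qed

lemma minpoly_pderiv:
  assumes g: "is_minpoly g x"
  shows "poly (pderiv (rp g)) x \<noteq> 0"
proof
  assume 0: "poly (pderiv (rp g)) x = 0"
  have gnz: "g \<noteq> 0" and gx: "poly (rp g) x = 0" using g by (auto simp: is_minpoly_def)
  have "degree g \<noteq> 0"
  proof
    assume "degree g = 0"
    then obtain c where "g = [:c:]" by (metis degree_eq_zeroE)
    then show False using gnz gx by simp
  qed
  then have "pderiv g \<noteq> 0" by (simp add: pderiv_eq_0_iff)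
  moreover have "poly (rp (pderiv g)) x = 0" using 0 by (simp add: rp_pderiv)
  ultimately have "degree g \<le> degree (pderiv g)" using g by (auto simp: is_minpoly_def)
  then show False using \<open>degree g \<noteq> 0\<close> by (simp add: degree_pderiv)
qed

lemma minpoly_inverse:
  assumes g: "is_minpoly g x" and px: "poly (rp p) x \<noteq> 0"
  shows "\<exists>s. poly (rp s) x * poly (rp p) x = 1"
proof -
  have gnz: "g \<noteq> 0" and gx: "poly (rp g) x = 0" using g by (auto simp: is_minpoly_def)
  define d where "d = gcd p g"
  define s where "s = fst (bezout_coefficients p g)"
  define t where "t = snd (bezout_coefficients p g)"
  have bez: "s * p + t * g = d" unfolding s_def t_def d_def by (rule bezout_coefficients_fst_snd)
  have "d dvd g" unfolding d_def by simp
  then obtain e where e: "g = d * e" by (auto elim: dvdE)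
  have "d dvd p" unfolding d_def by simp
  then obtain f where f: "p = d * f" by (auto elim: dvdE)
  have dnz: "d \<noteq> 0" using gnz by (simp add: d_def)
  have enz: "e \<noteq> 0" using gnz e by auto
  show ?thesis
  proof (cases "degree d = 0")
    case True
    then obtain c where c: "d = [:c:]" by (metis degree_eq_zeroE)
    with dnz have "c \<noteq> 0" by auto
    have "poly (rp s) x * poly (rp p) x + poly (rp t) x * poly (rp g) x = of_rat c"
      using arg_cong[OF bez, of "\<lambda>q. poly (rp q) x"] c by simp
    then have "poly (rp s) x * poly (rp p) x = of_rat c" using gx by simp
    then have "poly (rp (smult (inverse c) s)) x * poly (rp p) x = 1"
    proof -
      have "poly (rp (smult (inverse c) s)) x * poly (rp p) x
          = of_rat (inverse c) * (poly (rp s) x * poly (rp p) x)" by simp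
      also have "\<dots> = 1" using \<open>c \<noteq> 0\<close> \<open>poly (rp s) x * poly (rp p) x = of_rat c\<close>
        by (simp add: of_rat_inverse)
      finally show ?thesis .
    qed
    then show ?thesis by blast
  next
    case False
    have "poly (rp d) x * poly (rp f) x \<noteq> 0" using px f by simp
    then have "poly (rp d) x \<noteq> 0" by auto
    moreover have "poly (rp d) x * poly (rp e) x = 0" using gx e by simp
    ultimately have "poly (rp e) x = 0" by simp
    with enz g have "degree g \<le> degree e" by (auto simp: is_minpoly_def)
    moreover have "degree g = degree d + degree e" using e dnz enz by (simp add: degree_mult_eq)
    ultimately show ?thesis using False by simp
  qed
qed

definition Qpoly :: "real \<Rightarrow> real set" where
  "Qpoly x = {poly (rp p) x | p. True}"

lemma Qpoly_subfield:
  assumes alg: "\<exists>p. p \<noteq> 0 \<and> poly (rp p) x = 0"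
  shows "real_subfield (Qpoly x)"
proof -
  obtain g where g: "is_minpoly g x" using minpoly_exists[OF alg] by blast
  have c: "poly (rp [:r:]) x \<in> Qpoly x" for r unfolding Qpoly_def by blast
  have "0 \<in> Qpoly x" using c[of 0] by simp
  moreover have "1 \<in> Qpoly x" using c[of 1] by simp
  moreover have "\<forall>a\<in>Qpoly x. \<forall>b\<in>Qpoly x. a + b \<in> Qpoly x \<and> a - b \<in> Qpoly x \<and> a * b \<in> Qpoly x"
  proof (intro ballI conjI)
    fix a b assume "a \<in> Qpoly x" "b \<in> Qpoly x"
    then obtain p q where pq: "a = poly (rp p) x" "b = poly (rp q) x" unfolding Qpoly_def by blast
    have "a + b = poly (rp (p + q)) x" "a - b = poly (rp (p - q)) x" "a * b = poly (rp (p * q)) x"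
      using pq by simp_all
    then show "a + b \<in> Qpoly x" "a - b \<in> Qpoly x" "a * b \<in> Qpoly x" unfolding Qpoly_def by blast+
  qed
  moreover have "\<forall>a\<in>Qpoly x. a \<noteq> 0 \<longrightarrow> inverse a \<in> Qpoly x"
  proof (intro ballI impI)
    fix a assume "a \<in> Qpoly x" "a \<noteq> 0"
    then obtain p where p: "a = poly (rp p) x" unfolding Qpoly_def by blast
    obtain s where "poly (rp s) x * poly (rp p) x = 1" using minpoly_inverse[OF g] p \<open>a \<noteq> 0\<close> by blast
    then have "inverse a = poly (rp s) x" using p by (metis inverse_unique mult.commute)
    then show "inverse a \<in> Qpoly x" unfolding Qpoly_def by blast
  qed
  ultimately show ?thesis unfolding real_subfield_def by blast
qed

lemma x_in_Qpoly: "x \<in> Qpoly x"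
proof -
  have "x = poly (rp [:0, 1:]) x" by simp
  then show ?thesis unfolding Qpoly_def by blast
qed

lemma Q_adjoin_Qpoly:
  assumes alg: "\<exists>p. p \<noteq> 0 \<and> poly (rp p) x = 0"
  shows "Q_adjoin x \<subseteq> Qpoly x"
  by (rule Q_adjoin_min[OF Qpoly_subfield[OF alg] x_in_Qpoly])



section \<open>Polynomials with coefficients in a subfield\<close>

definition inF :: "real set \<Rightarrow> real poly \<Rightarrow> bool" where
  "inF F p \<longleftrightarrow> (\<forall>i. coeff p i \<in> F)"

context
  fixes F assumes F: "real_subfield F"
begin

lemma inF_0: "inF F 0" using sf_0[OF F] by (simp add: inF_def)
lemma inF_const: "c \<in> F \<Longrightarrow> inF F [:c:]" using sf_0[OF F] by (simp add: inF_def coeff_pCons split: nat.splits)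
lemma inF_add: "inF F p \<Longrightarrow> inF F q \<Longrightarrow> inF F (p + q)" by (simp add: inF_def sf_add[OF F])
lemma inF_diff: "inF F p \<Longrightarrow> inF F q \<Longrightarrow> inF F (p - q)" by (simp add: inF_def sf_diff[OF F])
lemma inF_smult: "c \<in> F \<Longrightarrow> inF F p \<Longrightarrow> inF F (smult c p)" by (simp add: inF_def sf_mult[OF F])
lemma inF_mult: "inF F p \<Longrightarrow> inF F q \<Longrightarrow> inF F (p * q)"
  unfolding inF_def coeff_mult by (auto intro!: sf_sum[OF F] sf_mult[OF F])
lemma inF_pCons: "c \<in> F \<Longrightarrow> inF F p \<Longrightarrow> inF F (pCons c p)"
  by (simp add: inF_def coeff_pCons split: nat.splits)
lemma inF_monom: "c \<in> F \<Longrightarrow> inF F (monom c n)"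
  by (simp add: inF_def coeff_monom sf_0[OF F])
lemma inF_rp: "inF F (rp p)" by (simp add: inF_def sf_of_rat[OF F])
lemma inF_power: "inF F p \<Longrightarrow> inF F (p ^ n)"
  by (induction n) (auto intro: inF_mult inF_const simp: sf_1[OF F] simp del: pCons_one simp add: one_pCons)
lemma inF_pcompose: "inF F p \<Longrightarrow> inF F q \<Longrightarrow> inF F (pcompose p q)"
proof (induction p)
  case 0 then show ?case by (simp add: inF_0)
next
  case (pCons a p)
  have "a \<in> F" "inF F p" using pCons.prems by (auto simp: inF_def coeff_pCons split: nat.splits)
  then show ?case using pCons by (auto simp: pcompose_pCons intro!: inF_add inF_const inF_mult)
qed

lemma inF_mod: "inF F p \<Longrightarrow> inF F q \<Longrightarrow> inF F (p mod q)"
proof (induction "degree p" arbitrary: p rule: less_induct)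
  case less
  show ?case
  proof (cases "q = 0")
    case True then show ?thesis using less by simp
  next
    case qnz: False
    show ?thesis
    proof (cases "degree p < degree q")
      case True then show ?thesis using less by (simp add: mod_poly_less)
    next
      case False
      define k where "k = degree p - degree q"
      define c where "c = lead_coeff p / lead_coeff q"
      define t where "t = monom c k"
      define r where "r = p - t * q"
      have cF: "c \<in> F" unfolding c_def using less.prems by (auto simp: inF_def intro!: sf_divide[OF F])
      have rF: "inF F r" unfolding r_def t_def using less.prems cF by (auto intro!: inF_diff inF_mult inF_monom)
      have "p mod q = (r + t * q) mod q" by (simp add: r_def)
      also have "\<dots> = r mod q" by (rule mod_mult_self1)
      finally have eq: "p mod q = r mod q" .
      have dtq: "degree (t * q) \<le> degree p"
      proof -
        have "degree (t * q) \<le> degree t + degree q" by (rule degree_mult_le)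
        also have "degree t \<le> k" unfolding t_def by (rule degree_monom_le)
        then have "degree t + degree q \<le> k + degree q" by simp
        also have "k + degree q = degree p" using False by (simp add: k_def)
        finally show ?thesis by simp
      qed
      have ctq: "coeff (t * q) (degree p) = lead_coeff p"
        unfolding t_def using False qnz by (simp add: coeff_monom_mult k_def c_def)
      have cr: "coeff r (degree p) = 0" by (simp add: r_def ctq)
      have dr: "degree r \<le> degree p" unfolding r_def using dtq by (simp add: degree_diff_le)
      show ?thesis
      proof (cases "r = 0")
        case True then show ?thesis using eq by (simp add: inF_0)
      next
        case False
        then have "degree r \<noteq> degree p" using cr by (metis leading_coeff_0_iff)
        then have "degree r < degree p" using dr by simp
        then show ?thesis using less.hyps[OF _ rF less.prems(2)] eq by simp
      qed
    qed
  qed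
qed

lemma inF_normalize: "inF F p \<Longrightarrow> inF F (normalize p)"
  unfolding normalize_poly_eq_map_poly inF_def
  by (auto simp: coeff_map_poly intro!: sf_divide[OF F])

lemma inF_gcd: "inF F p \<Longrightarrow> inF F q \<Longrightarrow> inF F (gcd p q)"
proof (induction "degree q" arbitrary: p q rule: less_induct)
  case less
  show ?case
  proof (cases "q = 0")
    case True then show ?thesis using less by (simp add: inF_normalize)
  next
    case qnz: False
    have g: "gcd p q = gcd q (p mod q)" using qnz by (simp add: gcd.commute)
    have mF: "inF F (p mod q)" using less.prems by (rule inF_mod)
    show ?thesis
    proof (cases "p mod q = 0")
      case True then show ?thesis using g less.prems by (simp add: inF_normalize)
    next
      case False
      then have "degree (p mod q) < degree q" using qnz by (simp add: degree_mod_less')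
      then show ?thesis using less.hyps[OF _ less.prems(2) mF] g by simp
    qed
  qed
qed

end

definition cp :: "real poly \<Rightarrow> complex poly" where "cp p = map_poly of_real p"

lemma cp_add [simp]: "cp (p + q) = cp p + cp q"
  by (intro poly_eqI) (simp add: cp_def coeff_map_poly)
lemma cp_smult [simp]: "cp (smult c p) = smult (of_real c) (cp p)"
  by (simp add: cp_def map_poly_smult)
lemma cp_pCons [simp]: "cp (pCons c p) = pCons (of_real c) (cp p)"
  by (simp add: cp_def map_poly_pCons)
lemma cp_0 [simp]: "cp 0 = 0" by (simp add: cp_def)
lemma cp_mult [simp]: "cp (p * q) = cp p * cp q"
  by (induction p) simp_all
lemma cp_eq_0_iff [simp]: "cp p = 0 \<longleftrightarrow> p = 0"
  by (simp add: cp_def map_poly_eq_0_iff)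
lemma degree_cp [simp]: "degree (cp p) = degree p"
  by (simp add: cp_def degree_map_poly)
lemma poly_cp_of_real [simp]: "poly (cp p) (of_real x) = of_real (poly p x)"
  by (induction p) simp_all
lemma cp_dvd: "p dvd q \<Longrightarrow> cp p dvd cp q"
  by (auto elim!: dvdE)

lemma pderiv_zero_if_sq_dvd:
  fixes g :: "real poly"
  assumes "[:-b, 1:] ^ 2 dvd g"
  shows "poly (pderiv g) b = 0"
proof -
  from assms obtain k where k: "g = [:-b, 1:] ^ 2 * k" by (auto elim: dvdE)
  define x where "x = [:-b, 1:]"
  have x0: "poly x b = 0" by (simp add: x_def)
  have "pderiv g = x ^ 2 * pderiv k + k * (x * pderiv x + x * pderiv x)"
    unfolding k x_def[symmetric] by (simp only: pderiv_mult power2_eq_square)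
  then show ?thesis using x0 by simp
qed

lemma GL:
  assumes F: "real_subfield F"
    and hF: "inF F h" and gF: "inF F g" and gnz: "g \<noteq> 0"
    and gb: "poly g b = 0" and g'b: "poly (pderiv g) b \<noteq> 0" and hb: "poly h b = 0"
    and uniq: "\<And>z. poly (cp g) z = 0 \<Longrightarrow> poly (cp h) z = 0 \<Longrightarrow> z = of_real b"
  shows "b \<in> F"
proof -
  define d where "d = gcd h g"
  have dF: "inF F d" unfolding d_def by (rule inF_gcd[OF F hF gF])
  have dnz: "d \<noteq> 0" using gnz by (simp add: d_def)
  have "[:-b, 1:] dvd h" "[:-b, 1:] dvd g" using hb gb by (simp_all add: poly_eq_0_iff_dvd)
  then have "[:-b, 1:] dvd d" unfolding d_def by simp
  then obtain e where e: "d = [:-b, 1:] * e" by (auto elim: dvdE)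
  have enz: "e \<noteq> 0" using dnz e by auto
  have "degree e = 0"
  proof (rule ccontr)
    assume "degree e \<noteq> 0"
    then have "\<not> constant (poly (cp e))" by (simp add: constant_degree)
    then obtain z where z: "poly (cp e) z = 0" using fundamental_theorem_of_algebra by blast
    have "cp d dvd cp g" "cp d dvd cp h" unfolding d_def by (simp_all add: cp_dvd)
    moreover have "poly (cp d) z = 0"
    proof -
      have "cp d = cp [:-b, 1:] * cp e" using e by (simp only: cp_mult)
      then show ?thesis using z by simp
    qed
    ultimately have "poly (cp g) z = 0" "poly (cp h) z = 0"
      by (auto simp: poly_eq_0_iff_dvd intro: dvd_trans)
    then have "z = of_real b" using uniq by blast
    then have "poly e b = 0" using z by simp
    then have "[:-b, 1:] dvd e" by (simp add: poly_eq_0_iff_dvd)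
    then have "[:-b, 1:] ^ 2 dvd d" unfolding e power2_eq_square by (rule mult_dvd_mono[OF dvd_refl])
    moreover have "d dvd g" unfolding d_def by simp
    ultimately have "[:-b, 1:] ^ 2 dvd g" by (rule dvd_trans)
    then show False using g'b pderiv_zero_if_sq_dvd by blast
  qed
  then obtain e0 where e0: "e = [:e0:]" by (metis degree_eq_zeroE)
  with enz have "e0 \<noteq> 0" by auto
  have c1: "coeff d 1 = e0" and c0: "coeff d 0 = - b * e0" using e e0 by simp_all
  have "e0 \<in> F" "- b * e0 \<in> F" using dF c1 c0 unfolding inF_def by metis+
  then have "- (- b * e0) / e0 \<in> F" by (intro sf_divide[OF F] sf_uminus[OF F])
  then show ?thesis using \<open>e0 \<noteq> 0\<close> by simp
qed



lemma cp_pcompose: "cp (pcompose p r) = pcompose (cp p) (cp r)"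
  by (induction p) (simp_all add: pcompose_pCons)

lemma cp_rp_const [simp]: "cp [:c:] = [:of_real c:]" by simp

lemma finite_roots_cp:
  assumes "p \<noteq> 0" shows "finite {z. poly (cp p) z = 0}"
  using assms by (intro poly_roots_finite) simp

lemma avoid_nat:
  fixes S :: "complex set" and N :: nat
  assumes "finite S"
  shows "\<exists>n::nat. n \<ge> N \<and> of_nat n \<notin> S"
proof (rule ccontr)
  assume "\<not> ?thesis"
  then have "(of_nat :: nat \<Rightarrow> complex) ` {N..} \<subseteq> S" by auto
  then have "finite ((of_nat :: nat \<Rightarrow> complex) ` {N..})" using assms finite_subset by blast
  moreover have "inj_on (of_nat :: nat \<Rightarrow> complex) {N..}" by (auto simp: inj_on_def)
  ultimately have "finite {N..}" using finite_image_iff by blast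
  then show False using infinite_Ici[of N] by simp
qed

lemma PE_step:
  assumes f: "f \<noteq> 0" "poly (rp f) a = 0" and g: "is_minpoly g b"
  shows "\<exists>q::rat. a \<in> Q_adjoin (a + of_rat q * b) \<and> b \<in> Q_adjoin (a + of_rat q * b)"
proof -
  have gnz: "g \<noteq> 0" and gb: "poly (rp g) b = 0" using g by (auto simp: is_minpoly_def)
  define Rf where "Rf = {w. poly (cp (rp f)) w = 0}"
  define Rg where "Rg = {z. poly (cp (rp g)) z = 0}"
  have fin: "finite Rf" "finite Rg" unfolding Rf_def Rg_def using f gnz by (simp_all add: finite_roots_cp)
  define Bad where "Bad = (\<lambda>(w, z). (w - of_real a) / (of_real b - z)) ` (Rf \<times> Rg)"
  have "finite Bad" unfolding Bad_def using fin by simp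
  then obtain n :: nat where n: "of_nat n \<notin> Bad" using avoid_nat by blast
  define q :: rat where "q = of_nat n"
  define d where "d = a + of_rat q * b"
  define F where "F = Q_adjoin d"
  have F: "real_subfield F" unfolding F_def by (rule sf_Q_adjoin)
  have dF: "d \<in> F" unfolding F_def by (rule in_Q_adjoin)
  define h where "h = pcompose (rp f) [:d, - of_rat q:]"
  have hF: "inF F h" unfolding h_def
    by (intro inF_pcompose[OF F] inF_rp[OF F] inF_pCons[OF F] inF_const[OF F] dF sf_uminus[OF F] sf_of_rat[OF F])
  have hb: "poly h b = 0" unfolding h_def using f by (simp add: poly_pcompose d_def)
  have "b \<in> F"
  proof (rule GL[OF F hF inF_rp[OF F]])
    show "rp g \<noteq> 0" using gnz by simp
    show "poly (rp g) b = 0" by (fact gb)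
    show "poly (pderiv (rp g)) b \<noteq> 0" by (rule minpoly_pderiv[OF g])
    show "poly h b = 0" by (fact hb)
    fix z assume z: "poly (cp (rp g)) z = 0" "poly (cp h) z = 0"
    have "poly (cp h) z = poly (cp (rp f)) (of_real d - of_real (of_rat q) * z)"
      unfolding h_def cp_pcompose by (simp add: poly_pcompose mult.commute)
    then have w: "of_real d - of_real (of_rat q) * z \<in> Rf" using z unfolding Rf_def by simp
    show "z = of_real b"
    proof (rule ccontr)
      assume zb: "z \<noteq> of_real b"
      have "(of_real d - of_real (of_rat q) * z - of_real a) / (of_real b - z) = (of_nat n :: complex)"
        using zb by (simp add: d_def q_def field_simps)
      moreover have "(of_real d - of_real (of_rat q) * z - of_real a) / (of_real b - z) \<in> Bad"
        unfolding Bad_def using w z(1) unfolding Rg_def by force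
      ultimately show False using n by simp
    qed
  qed
  moreover have "a \<in> F"
  proof -
    have "d - of_rat q * b \<in> F" by (intro sf_diff[OF F] dF sf_mult[OF F] sf_of_rat[OF F] \<open>b \<in> F\<close>)
    then show ?thesis by (simp add: d_def)
  qed
  ultimately show ?thesis unfolding F_def d_def by blast
qed

lemma primitive_element:
  assumes K: "real_number_field K"
  shows "\<exists>x\<in>K. K = Q_adjoin x"
proof -
  from K obtain B where B: "finite B" "B \<subseteq> K"
    "\<forall>y\<in>K. \<exists>c :: real \<Rightarrow> rat. y = (\<Sum>b\<in>B. of_rat (c b) * b)"
    unfolding real_number_field_def by blast
  have KF: "real_subfield K" using K by (simp add: real_number_field_def)
  have "\<exists>x\<in>K. S \<subseteq> Q_adjoin x" if "finite S" "S \<subseteq> K" for S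
    using that
  proof (induction S rule: finite_induct)
    case empty then show ?case using sf_0[OF KF] by blast
  next
    case (insert b S)
    then obtain x where x: "x \<in> K" "S \<subseteq> Q_adjoin x" by blast
    have bK: "b \<in> K" using insert by simp
    obtain f where f: "f \<noteq> 0" "poly (rp f) x = 0" using algebraic_in_K[OF K x(1)] by blast
    obtain g where g: "is_minpoly g b" using minpoly_exists algebraic_in_K[OF K bK] by blast
    obtain q where q: "x \<in> Q_adjoin (x + of_rat q * b)" "b \<in> Q_adjoin (x + of_rat q * b)"
      using PE_step[OF f g] by blast
    define d where "d = x + of_rat q * b"
    have dK: "d \<in> K" unfolding d_def by (intro sf_add[OF KF] sf_mult[OF KF] sf_of_rat[OF KF] x(1) bK)
    have "Q_adjoin x \<subseteq> Q_adjoin d" using q(1) unfolding d_def by (intro Q_adjoin_min sf_Q_adjoin)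
    then have "insert b S \<subseteq> Q_adjoin d" using x(2) q(2) d_def by blast
    then show ?case using dK by blast
  qed
  from this[OF B(1,2)] obtain x where x: "x \<in> K" "B \<subseteq> Q_adjoin x" by blast
  have "K \<subseteq> Q_adjoin x"
  proof
    fix y assume "y \<in> K"
    then obtain c where "y = (\<Sum>b\<in>B. of_rat (c b) * b)" using B by blast
    moreover have "(\<Sum>b\<in>B. of_rat (c b) * b) \<in> Q_adjoin x"
      using x(2) by (intro sf_sum[OF sf_Q_adjoin] sf_mult[OF sf_Q_adjoin] sf_of_rat[OF sf_Q_adjoin]) auto
    ultimately show "y \<in> Q_adjoin x" by simp
  qed
  moreover have "Q_adjoin x \<subseteq> K" by (rule Q_adjoin_min[OF KF x(1)])
  ultimately show ?thesis using x(1) by blast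
qed



lemma cp_1 [simp]: "cp 1 = 1" by (simp add: cp_def)
lemma cp_diff [simp]: "cp (p - q) = cp p - cp q"
  by (intro poly_eqI) (simp add: cp_def coeff_map_poly)
lemma cp_power [simp]: "cp (p ^ k) = cp p ^ k" by (induction k) simp_all

lemma generic_M:
  assumes K: "real_number_field K" and aK: "a \<in> K" and a: "a > 0" and cK: "c \<in> K" and c: "c > 0"
  shows "\<exists>x0\<in>K. x0 \<ge> 1 \<and> x0 \<ge> 1 / a \<and>
           K \<subseteq> Q_adjoin ((a * x0^2 + c) + 1 / (a * x0^2 + c))"
proof -
  have KF: "real_subfield K" using K by (simp add: real_number_field_def)
  obtain xi where xi: "xi \<in> K" "K = Q_adjoin xi" using primitive_element[OF K] by blast
  have alg: "\<exists>p. p \<noteq> 0 \<and> poly (rp p) xi = 0" by (rule algebraic_in_K[OF K xi(1)])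
  have KQ: "K \<subseteq> Qpoly xi" using Q_adjoin_Qpoly[OF alg] xi(2) by simp
  obtain A where A: "a = poly (rp A) xi" using KQ aK unfolding Qpoly_def by blast
  obtain C where C: "c = poly (rp C) xi" using KQ cK unfolding Qpoly_def by blast
  obtain g where g: "is_minpoly g xi" using minpoly_exists[OF alg] by blast
  have gnz: "g \<noteq> 0" and gxi: "poly (rp g) xi = 0" using g by (auto simp: is_minpoly_def)
  define Z where "Z = {z. poly (cp (rp g)) z = 0 \<and> z \<noteq> of_real xi}"
  have finZ: "finite Z" unfolding Z_def using finite_roots_cp[of "rp g"] gnz
    by (auto intro: finite_subset)
  define Az where "Az z = poly (cp (rp A)) z" for z
  define Cz where "Cz z = poly (cp (rp C)) z" for z
  define p1 where "p1 z = [:Az z * z^2 + Cz z, 2 * Az z * z, Az z:]" for z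
  define p2 where "p2 = [:complex_of_real (a * xi^2 + c), of_real (2 * a * xi), of_real a:]"
  define Bad where "Bad = (\<Union>z\<in>Z. {w. poly (p1 z - p2) w = 0} \<union> {w. poly (p1 z * p2 - 1) w = 0})"
  have p2nz: "p2 \<noteq> 0" and dp2: "degree p2 = 2" using a by (simp_all add: p2_def)
  have "finite Bad" unfolding Bad_def
  proof (intro finite_UN_I[OF finZ] finite_UnI)
    fix z assume z: "z \<in> Z"
    have "p1 z \<noteq> p2"
    proof
      assume eq: "p1 z = p2"
      have "Az z = of_real a" using arg_cong[OF eq, of "\<lambda>p. coeff p 2"] by (simp add: p1_def p2_def numeral_2_eq_2)
      moreover have "2 * Az z * z = of_real (2 * a * xi)" using arg_cong[OF eq, of "\<lambda>p. coeff p 1"] by (simp add: p1_def p2_def)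
      ultimately have "z = of_real xi" using a by simp
      then show False using z by (simp add: Z_def)
    qed
    then have "p1 z - p2 \<noteq> 0" by simp
    then show "finite {w. poly (p1 z - p2) w = 0}" by (rule poly_roots_finite)
    have "p1 z * p2 \<noteq> 1"
    proof
      assume eq: "p1 z * p2 = 1"
      then have "p1 z \<noteq> 0" by auto
      then have "degree (p1 z * p2) = degree (p1 z) + 2" using p2nz dp2 by (simp add: degree_mult_eq)
      then show False using eq by simp
    qed
    then have "p1 z * p2 - 1 \<noteq> 0" by simp
    then show "finite {w. poly (p1 z * p2 - 1) w = 0}" by (rule poly_roots_finite)
  qed
  then obtain n :: nat where n: "n \<ge> nat \<lceil>max 1 (1 / a) - xi\<rceil>" "of_nat n \<notin> Bad"
    using avoid_nat by blast
  define x0 where "x0 = xi + of_nat n"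
  have x0b: "x0 \<ge> max 1 (1 / a)" using n(1) unfolding x0_def by linarith
  define M where "M = a * x0^2 + c"
  define W where "W = M + 1 / M"
  have x0K: "x0 \<in> K" unfolding x0_def by (intro sf_add[OF KF] xi(1) sf_of_nat[OF KF])
  define F where "F = Q_adjoin W"
  have F: "real_subfield F" unfolding F_def by (rule sf_Q_adjoin)
  have WF: "W \<in> F" unfolding F_def by (rule in_Q_adjoin)
  define m where "m = rp (A * [:of_nat n, 1:]^2 + C)"
  define h where "h = m^2 - smult W m + 1"
  have mxi: "poly m xi = M" unfolding m_def M_def x0_def using A C by (simp add: power2_eq_square algebra_simps of_rat_mult)
  have Mpos: "M > 0" unfolding M_def using a c by (simp add: add_nonneg_pos)
  have hxi: "poly h xi = 0"
  proof -
    have "poly h xi = M^2 - W * M + 1" by (simp add: h_def mxi)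
    moreover have "W * M = M^2 + 1" using Mpos unfolding W_def
      by (simp add: distrib_right power2_eq_square)
    ultimately show ?thesis by simp
  qed
  have hF: "inF F h" unfolding h_def m_def
    by (intro inF_add[OF F] inF_diff[OF F] inF_power[OF F] inF_smult[OF F] inF_rp[OF F] WF)
       (simp add: inF_def sf_0[OF F] sf_1[OF F] coeff_1)
  have "xi \<in> F"
  proof (rule GL[OF F hF inF_rp[OF F]])
    show "rp g \<noteq> 0" using gnz by simp
    show "poly (rp g) xi = 0" by (fact gxi)
    show "poly (pderiv (rp g)) xi \<noteq> 0" by (rule minpoly_pderiv[OF g])
    show "poly h xi = 0" by (fact hxi)
    fix z assume z: "poly (cp (rp g)) z = 0" "poly (cp h) z = 0"
    show "z = of_real xi"
    proof (rule ccontr)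
      assume zx: "z \<noteq> of_real xi"
      then have zZ: "z \<in> Z" using z(1) by (simp add: Z_def)
      define t where "t = poly (cp m) z"
      define T where "T = complex_of_real M"
      have TW: "complex_of_real W = T + 1 / T" by (simp add: W_def T_def)
      have Tnz: "T \<noteq> 0" using Mpos by (simp add: T_def)
      have "t^2 - of_real W * t + 1 = 0" using z(2) by (simp add: h_def t_def)
      moreover have "(t - T) * (t * T - 1) = T * (t^2 - (T + 1 / T) * t + 1)"
      proof -
        have e: "T * (1 / T) = 1" using Tnz by simp
        have "T * (t^2 - (T + 1 / T) * t + 1) = T * t^2 - T * T * t - (T * (1 / T)) * t + T"
          by (simp add: algebra_simps)
        also have "\<dots> = (t - T) * (t * T - 1)" unfolding e by (simp add: algebra_simps power2_eq_square)
        finally show ?thesis by simp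
      qed
      ultimately have "(t - T) * (t * T - 1) = 0" unfolding TW by simp
      then have tT: "t = T \<or> t * T = 1" by auto
      have "cp m = cp (rp A) * [:of_nat n, 1:]^2 + cp (rp C)" by (simp add: m_def)
      then have "t = Az z * (of_nat n + z)^2 + Cz z" by (simp add: t_def Az_def Cz_def)
      also have "\<dots> = poly (p1 z) (of_nat n)" by (simp add: p1_def) algebra
      finally have t1: "t = poly (p1 z) (of_nat n)" .
      have T2: "T = poly p2 (of_nat n)"
        by (simp add: T_def p2_def M_def x0_def) algebra
      from tT have "of_nat n \<in> Bad" unfolding Bad_def using zZ t1 T2 by auto
      then show False using n(2) by blast
    qed
  qed
  then have "K \<subseteq> F" using xi(2) Q_adjoin_min[OF F] by blast
  then show ?thesis using x0K x0b unfolding F_def W_def M_def by auto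
qed



lemma rat_t_exists:
  fixes a d :: real assumes a: "a > 0" and d: "d > 0"
  shows "\<exists>t\<in>\<rat>. t > 0 \<and> a * t^2 - 1 > 0 \<and> a * t^2 - 1 < d"
proof -
  have "sqrt (1 / a) < sqrt ((1 + d) / a)" using a d by (simp add: divide_strict_right_mono)
  then obtain t where t: "t \<in> \<rat>" "sqrt (1 / a) < t" "t < sqrt ((1 + d) / a)"
    using Rats_dense_in_real by blast
  have t0: "t > 0" using t(2) a by (meson order.strict_trans1 real_sqrt_ge_zero less_eq_real_def divide_pos_pos zero_less_one)
  have "(sqrt (1 / a))^2 < t^2" using t(2) a by (intro power_strict_mono) auto
  then have "1 / a < t^2" using a by simp
  then have l: "1 < a * t^2" using a by (simp add: field_simps)
  have "t^2 < (sqrt ((1 + d) / a))^2" using t(3) t0 by (intro power_strict_mono) auto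
  then have "t^2 < (1 + d) / a" using a d by simp
  then have r: "a * t^2 < 1 + d" using a by (simp add: field_simps)
  show ?thesis using t(1) t0 l r by auto
qed


lemma H107: fixes e :: "'a::linordered_field" assumes "e \<noteq> 0"
  shows "(2 + 4 / e)^2 - 4 = 16 * (1 + e) / e^2"
  using assms by (simp add: field_simps power2_eq_square)
lemma H153: fixes M D :: "'a::linordered_field" assumes "D \<noteq> 0" "M \<noteq> 0"
  shows "(2 * (2 * (M^2 + 1) / D)) / (4 * M / D) = (M^2 + 1) / M"
  using assms by (simp add: field_simps)
lemma H99: fixes a b c k M X x0 y u w v th :: "'a::comm_ring_1"
  assumes "a * b * w^2 - b * v^2 = a * c * k^2" "X = a * x0 * k" "y = th * u" "M = a * x0^2 + c"
  shows "X^2 - a * y^2 + a * u^2 - b * v^2 + a * b * w^2 = a * k^2 * M - a * u^2 * (th^2 - 1)"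
proof -
  have "X^2 - a * y^2 + a * u^2 - b * v^2 + a * b * w^2 = X^2 - a * y^2 + a * u^2 + (a * b * w^2 - b * v^2)"
    by (simp add: algebra_simps)
  also have "\<dots> = X^2 - a * y^2 + a * u^2 + a * c * k^2" using assms(1) by simp
  also have "\<dots> = a * k^2 * M - a * u^2 * (th^2 - 1)" unfolding assms(2-4)
    by (simp add: algebra_simps power2_eq_square)
  finally show ?thesis .
qed
lemma H128: fixes e c Q :: "'a::linordered_field" assumes "e * (Q + 1) < c" "e > 0"
  shows "e * Q < c"
proof -
  have "e * (Q + 1) = e * Q + e" by (simp add: distrib_left)
  then show ?thesis using assms by simp
qed
lemma H134: fixes e A :: "'a::linordered_field" assumes "A > 16 / e^2" "e > 0"
  shows "A * e^2 > 16"
proof -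
  have "e^2 > 0" using assms(2) by simp
  then have "(16 / e^2) * e^2 < A * e^2" using assms(1) by (intro mult_strict_right_mono) auto
  moreover have "(16 / e^2) * e^2 = 16" using \<open>e^2 > 0\<close> by simp
  ultimately show ?thesis by simp
qed
lemma H139: fixes D A :: "'a::linordered_field" assumes "D > 0" "D < A"
  shows "4 * A / D > 4"
  using assms by (simp add: field_simps)

theorem theorem4p1:
  fixes K :: "real set" and a b :: real
  assumes "real_number_field K" and "a \<in> K" and "b \<in> K" and "a > 0" and "b \<noteq> 0"
  shows "\<exists>x\<in>K. \<exists>y\<in>K. \<exists>z\<in>K. \<exists>u\<in>K. \<exists>v\<in>K. \<exists>w\<in>K.
           x^2 - a * y^2 + a * u^2 - b * v^2 + a * b * w^2 = 0 \<and>
           z^2 - 4 = a * u^2 \<and>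
           Q_adjoin (y / u) = K \<and> Q_adjoin (y^2 / u^2) = K \<and>
           u \<noteq> 0 \<and> x + y * z / (2 * u) > 2 \<and> y / u > 1 \<and> z > 2 \<and>
           a * b * w^2 - b * v^2 > 4"
proof -
  note K = assms(1) and aK = assms(2) and bK = assms(3) and a = assms(4) and b = assms(5)
  have KF: "real_subfield K" using K by (simp add: real_number_field_def)
  define c where "c = (if b > 0 then b else - a * b)"
  have c: "c > 0" using a b by (auto simp: c_def mult_pos_neg)
  have cK: "c \<in> K" unfolding c_def using aK bK by (auto intro: sf_uminus[OF KF] sf_mult[OF KF])
  obtain x0 where x0: "x0 \<in> K" "x0 \<ge> 1" "x0 \<ge> 1 / a"
    and gen: "K \<subseteq> Q_adjoin ((a * x0^2 + c) + 1 / (a * x0^2 + c))"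
    using generic_M[OF K aK a cK c] by blast
  define M where "M = a * x0^2 + c"
  have ax0: "a * x0 \<ge> 1" using x0(3) a by (simp add: field_simps)
  have "a * x0^2 = (a * x0) * x0" by (simp add: power2_eq_square)
  also have "\<dots> \<ge> 1 * 1" using ax0 x0(2) by (intro mult_mono) auto
  finally have "a * x0^2 \<ge> 1" by simp
  then have M1: "M > 1" using c by (simp add: M_def)
  have MK: "M \<in> K" unfolding M_def by (intro sf_add[OF KF] sf_mult[OF KF] sf_power[OF KF] aK x0(1) cK)
  define th where "th = (M + 1) / (M - 1)"
  have thK: "th \<in> K" unfolding th_def
    by (intro sf_divide[OF KF] sf_add[OF KF] sf_diff[OF KF] MK sf_1[OF KF])
  have th1: "th > 1" using M1 by (simp add: th_def)
  define dl where "dl = min 1 (c / ((M - 1)^2 + 1))"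
  have "(M - 1)^2 + 1 > 0" by (simp add: add_nonneg_pos)
  then have dl: "dl > 0" using c by (simp add: dl_def)
  obtain t where t: "t \<in> \<rat>" "t > 0" "a * t^2 - 1 > 0" "a * t^2 - 1 < dl"
    using rat_t_exists[OF a dl] by blast
  have tK: "t \<in> K" using sf_Rats[OF KF t(1)] .
  define e where "e = a * t^2 - 1"
  have e0: "e > 0" and e1: "e < 1" and ec: "e * ((M - 1)^2 + 1) < c"
  proof -
    show "e > 0" using t by (simp add: e_def)
    show "e < 1" using t by (simp add: e_def dl_def)
    have "e < c / ((M - 1)^2 + 1)" using t by (simp add: e_def dl_def)
    moreover have "(M - 1)^2 + 1 > 0" by (simp add: add_nonneg_pos)
    ultimately show "e * ((M - 1)^2 + 1) < c" by (simp add: pos_less_divide_eq)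
  qed
  have eK: "e \<in> K" unfolding e_def by (intro sf_diff[OF KF] sf_mult[OF KF] sf_power[OF KF] aK tK sf_1[OF KF])
  define u where "u = 4 * t / e"
  define z where "z = 2 + 4 / e"
  define k where "k = 2 * u / (M - 1)"
  define y where "y = th * u"
  define X where "X = a * x0 * k"
  define v where "v = (if b > 0 then 0 else a * k)"
  define w where "w = (if b > 0 then k else 0)"
  have u0: "u > 0" using t(2) e0 by (simp add: u_def)
  have k0: "k > 0" using u0 M1 by (simp add: k_def)
  have uK: "u \<in> K" unfolding u_def by (intro sf_divide[OF KF] sf_mult[OF KF] sf_numeral[OF KF] tK eK)
  have zK: "z \<in> K" unfolding z_def by (intro sf_add[OF KF] sf_divide[OF KF] sf_numeral[OF KF] eK)
  have kK: "k \<in> K" unfolding k_def by (intro sf_divide[OF KF] sf_mult[OF KF] sf_numeral[OF KF] uK sf_diff[OF KF] MK sf_1[OF KF])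
  have yK: "y \<in> K" unfolding y_def by (intro sf_mult[OF KF] thK uK)
  have XK: "X \<in> K" unfolding X_def by (intro sf_mult[OF KF] aK x0(1) kK)
  have vK: "v \<in> K" unfolding v_def using sf_0[OF KF] sf_mult[OF KF aK kK] by auto
  have wK: "w \<in> K" unfolding w_def using sf_0[OF KF] kK by auto
  have Dk: "a * b * w^2 - b * v^2 = a * c * k^2"
    by (cases "b > 0") (simp_all add: v_def w_def c_def power2_eq_square)
  have Mne: "M - 1 \<noteq> 0" using M1 by simp
  have D0: "(M - 1)^2 \<noteq> 0" using Mne by simp
  have thsq: "th^2 = (M + 1)^2 / (M - 1)^2" unfolding th_def by (simp add: power_divide)
  have th2: "th^2 - 1 = 4 * M / (M - 1)^2"
  proof -
    have "th^2 - 1 = ((M + 1)^2 - (M - 1)^2) / (M - 1)^2"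
      unfolding thsq using D0 by (simp add: diff_divide_distrib)
    also have "(M + 1)^2 - (M - 1)^2 = 4 * M" by (simp add: power2_eq_square algebra_simps)
    finally show ?thesis .
  qed
  have k2: "k^2 = 4 * u^2 / (M - 1)^2" unfolding k_def by (simp add: power2_eq_square)
  have eq1: "X^2 - a * y^2 + a * u^2 - b * v^2 + a * b * w^2 = 0"
  proof -
    have "X^2 - a * y^2 + a * u^2 - b * v^2 + a * b * w^2 = a * k^2 * M - a * u^2 * (th^2 - 1)"
      by (rule H99[OF Dk X_def y_def M_def])
    also have "\<dots> = 0" unfolding k2 th2 by simp
    finally show ?thesis .
  qed
  have eq2: "z^2 - 4 = a * u^2"
  proof -
    have at: "a * t^2 = 1 + e" by (simp add: e_def)
    have "z^2 - 4 = 16 * (1 + e) / e^2" unfolding z_def using e0 by (intro H107) simp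
    also have "\<dots> = 16 * (a * t^2) / e^2" unfolding at ..
    also have "\<dots> = a * u^2" unfolding u_def by (simp add: power2_eq_square)
    finally show ?thesis .
  qed
  have yu: "y / u = th" using u0 by (simp add: y_def)
  have yu2: "y^2 / u^2 = th^2" using u0 by (simp add: y_def power2_eq_square)
  have z6: "z > 6"
  proof -
    have "4 / e > 4" using e0 e1 by (simp add: field_simps)
    then show ?thesis by (simp add: z_def)
  qed
  have ineq1: "X + y * z / (2 * u) > 2"
  proof -
    have "X > 0" unfolding X_def using a x0(2) k0 by simp
    moreover have "y * z / (2 * u) = th * z / 2" using u0 by (simp add: y_def)
    moreover have "th * z > 1 * 6" using th1 z6 by (intro mult_strict_mono) auto
    ultimately show ?thesis by simp
  qed
  have ineq2: "a * b * w^2 - b * v^2 > 4"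
  proof -
    have "e * (M - 1)^2 < c" using ec e0 by (rule H128)
    moreover have "e^2 * (M - 1)^2 \<le> e * (M - 1)^2"
      using e0 e1 by (intro mult_right_mono) (simp_all add: power2_eq_square)
    ultimately have A: "e^2 * (M - 1)^2 < 16 * c" using c by simp
    have "a * u^2 = 16 * (1 + e) / e^2" unfolding u_def e_def by (simp add: power2_eq_square)
    then have "a * u^2 > 16 / e^2" using e0 by (simp add: divide_strict_right_mono)
    then have "a * u^2 * e^2 > 16" using e0 by (rule H134)
    then have "a * c * u^2 * e^2 > 16 * c" using c by (simp add: mult.commute mult.left_commute)
    with A have "(M - 1)^2 * e^2 < a * c * u^2 * e^2" by (simp add: mult.commute)
    then have B: "(M - 1)^2 < a * c * u^2" using e0 by simp
    have "a * c * k^2 = 4 * (a * c * u^2) / (M - 1)^2" unfolding k2 by simp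
    also have "\<dots> > 4" using B Mne by (intro H139) simp_all
    finally show ?thesis using Dk by simp
  qed
  have QK1: "Q_adjoin th \<subseteq> K" by (rule Q_adjoin_min[OF KF thK])
  have th2K: "th^2 \<in> K" using sf_power[OF KF thK] .
  have QK2: "Q_adjoin (th^2) \<subseteq> K" by (rule Q_adjoin_min[OF KF th2K])
  have Wth: "M + 1 / M = 2 * (th^2 + 1) / (th^2 - 1)"
  proof -
    have "th^2 + 1 = ((M + 1)^2 + (M - 1)^2) / (M - 1)^2"
      unfolding thsq using D0 by (simp add: add_divide_distrib)
    also have "(M + 1)^2 + (M - 1)^2 = 2 * (M^2 + 1)" by (simp add: power2_eq_square algebra_simps)
    finally have p: "th^2 + 1 = 2 * (M^2 + 1) / (M - 1)^2" .
    have "2 * (th^2 + 1) / (th^2 - 1) = (2 * (2 * (M^2 + 1) / (M - 1)^2)) / (4 * M / (M - 1)^2)"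
      unfolding p th2 ..
    also have "\<dots> = (M^2 + 1) / M" using D0 M1 by (intro H153) simp_all
    also have "\<dots> = M + 1 / M" using M1 by (simp add: power2_eq_square add_divide_distrib)
    finally show ?thesis by simp
  qed
  have "M + 1 / M \<in> Q_adjoin (th^2)" unfolding Wth using sf_Q_adjoin in_Q_adjoin
    by (intro sf_divide[OF sf_Q_adjoin] sf_mult[OF sf_Q_adjoin] sf_numeral[OF sf_Q_adjoin]
        sf_add[OF sf_Q_adjoin] sf_diff[OF sf_Q_adjoin] in_Q_adjoin sf_1[OF sf_Q_adjoin])
  then have "Q_adjoin (M + 1 / M) \<subseteq> Q_adjoin (th^2)" by (intro Q_adjoin_min sf_Q_adjoin)
  then have KQ2: "K \<subseteq> Q_adjoin (th^2)" using gen unfolding M_def by blast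
  have "th^2 \<in> Q_adjoin th" using sf_power[OF sf_Q_adjoin in_Q_adjoin] .
  then have "Q_adjoin (th^2) \<subseteq> Q_adjoin th" by (intro Q_adjoin_min sf_Q_adjoin)
  then have KQ1: "K \<subseteq> Q_adjoin th" using KQ2 by blast
  have "Q_adjoin (y / u) = K" using yu QK1 KQ1 by auto
  moreover have "Q_adjoin (y^2 / u^2) = K" using yu2 QK2 KQ2 by auto
  moreover have "y / u > 1" using yu th1 by simp
  moreover have "z > 2" using z6 by simp
  ultimately show ?thesis using XK yK zK uK vK wK eq1 eq2 u0 ineq1 ineq2 by blast
qed

end
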